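(* Let $X\sim p$ be a continuous random variable with a piecewise continuous density $p$ such that $H([X]_1)<\infty$, $\int_{\mathbb R}p(x)|\log p(x)|\,dx<\infty$ and $\operatorname{ess\,sup}_x p(x)=L<\infty$. Then for every real sequence $(c_m)_{m\ge1}$, $$\lim_{m\to\infty}\big(H([X+c_m]_m)-\log m\big)=h(X).$$
   Context: For $m>0$, $[x]_m=\frac1m\lfloor\frac12+mx\rfloor$; $H$ is discrete entropy and $h$ differential entropy (natural log). *)

theory Defs
  imports "HOL-Probability.Probability"
begin

definition quant :: "real \<Rightarrow> real \<Rightarrow> real" where
  "quant m x = real_of_int \<lfloor>1/2 + m * x\<rfloor> / m"

definition disc_entropy_term :: "'a measure \<Rightarrow> ('a \<Rightarrow> 'b) \<Rightarrow> 'b \<Rightarrow> real" where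
  "disc_entropy_term M Y y =
     - measure M {\<omega> \<in> space M. Y \<omega> = y} * ln (measure M {\<omega> \<in> space M. Y \<omega> = y})"

definition disc_entropy_finite :: "'a measure \<Rightarrow> ('a \<Rightarrow> 'b) \<Rightarrow> bool" where
  "disc_entropy_finite M Y \<longleftrightarrow> disc_entropy_term M Y summable_on UNIV"

definition disc_entropy :: "'a measure \<Rightarrow> ('a \<Rightarrow> 'b) \<Rightarrow> real" where
  "disc_entropy M Y = infsum (disc_entropy_term M Y) UNIV"

definition diff_entropy :: "(real \<Rightarrow> real) \<Rightarrow> real" where
  "diff_entropy p = - (LINT x|lborel. p x * ln (p x))"

definition piecewise_continuous :: "(real \<Rightarrow> real) \<Rightarrow> bool" where
  "piecewise_continuous f \<longleftrightarrow>
     (\<forall>a b. finite {x \<in> {a..b}. \<not> isCont f x}) \<and>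
     (\<forall>x. (\<exists>l. (f \<longlongrightarrow> l) (at_left x)) \<and> (\<exists>r. (f \<longlongrightarrow> r) (at_right x)))"

end

theory Submission imports Defs begin

lemma nn_sum_bridge:
  fixes g :: "'b \<Rightarrow> real"
  assumes "\<And>k. g k \<ge> 0"
  shows "g summable_on UNIV \<longleftrightarrow> (\<integral>\<^sup>+k. ennreal (g k) \<partial>count_space UNIV) < \<infinity>"
proof -
  have "g summable_on UNIV \<longleftrightarrow> integrable (count_space UNIV) g"
    using summable_on_iff_abs_summable_on_real abs_summable_equivalent Infinite_Set_Sum.abs_summable_on_def by blast
  also have "\<dots> \<longleftrightarrow> (\<integral>\<^sup>+k. ennreal (g k) \<partial>count_space UNIV) < \<infinity>"
    using assms by (subst integrable_iff_bounded) (auto)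
  finally show ?thesis .
qed

lemma nn_sum_bridge2:
  fixes g :: "'b \<Rightarrow> real"
  assumes "\<And>k. g k \<ge> 0" "g summable_on UNIV"
  shows "infsum g UNIV = enn2real (\<integral>\<^sup>+k. ennreal (g k) \<partial>count_space UNIV)"
proof -
  have a: "integrable (count_space UNIV) g"
    using assms summable_on_iff_abs_summable_on_real abs_summable_equivalent Infinite_Set_Sum.abs_summable_on_def by blast
  have "infsum g UNIV = infsetsum g UNIV" using infsetsum_infsum a Infinite_Set_Sum.abs_summable_on_def by metis
  also have "\<dots> = enn2real (\<integral>\<^sup>+k. ennreal (g k) \<partial>count_space UNIV)"
    using nn_integral_conv_infsetsum a assms(1) Infinite_Set_Sum.abs_summable_on_def by (metis enn2real_ennreal infsetsum_nonneg)
  finally show ?thesis .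
qed

definition kap :: "real \<Rightarrow> real \<Rightarrow> real \<Rightarrow> int" where
  "kap m s x = \<lfloor>1/2 + m*(x+s)\<rfloor>"

definition qn :: "(real \<Rightarrow> real) \<Rightarrow> real \<Rightarrow> real \<Rightarrow> int \<Rightarrow> ennreal" where
  "qn p m s k = (\<integral>\<^sup>+x. ennreal (p x) * indicator {x. kap m s x = k} x \<partial>lborel)"

lemma kap_meas[measurable]: "kap m s \<in> measurable borel (count_space UNIV)"
  unfolding kap_def by measurable

lemma kap_meas'[measurable]: "kap m s \<in> measurable lborel (count_space UNIV)"
  unfolding kap_def by measurable

lemma cell_eq:
  assumes "m > 0"
  shows "{x. kap m s x = k} = {(k - 1/2)/m - s ..< (k + 1/2)/m - s}"
proof -
  have "kap m s x = k \<longleftrightarrow> (k - 1/2)/m - s \<le> x \<and> x < (k+1/2)/m - s" for x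
  proof -
    have "kap m s x = k \<longleftrightarrow> real_of_int k \<le> 1/2 + m*(x+s) \<and> 1/2 + m*(x+s) < k + 1"
      unfolding kap_def by (simp add: floor_eq_iff)
    also have "\<dots> \<longleftrightarrow> (k - 1/2)/m - s \<le> x \<and> x < (k+1/2)/m - s"
      using assms by (simp add: field_simps)
    finally show ?thesis .
  qed
  then show ?thesis by (intro set_eqI) (simp only: mem_Collect_eq atLeastLessThan_iff)
qed

lemma cell_sets[measurable]: "{x. kap m s x = k} \<in> sets borel"
  by measurable

lemma cell_measure:
  assumes "m > 0"
  shows "emeasure lborel {x. kap m s x = k} = ennreal (1/m)"
proof -
  have le: "(k - 1/2)/m - s \<le> (k + 1/2)/m - s" using assms by (simp add: divide_right_mono)
  have "(k + 1/2)/m - s - ((k - 1/2)/m - s) = 1/m" using assms by (simp add: field_simps)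
  then show ?thesis unfolding cell_eq[OF assms] emeasure_lborel_Ico[OF le] by simp
qed

lemma nn_cs_point:
  "(\<integral>\<^sup>+k. (c::ennreal) * indicator {a} k \<partial>count_space UNIV) = c"
  by (simp add: nn_integral_cmult_indicator)

lemma step_integral:
  fixes G :: "int \<Rightarrow> ennreal"
  assumes "m > 0"
  shows "(\<integral>\<^sup>+x. G (kap m s x) \<partial>lborel) = (\<integral>\<^sup>+k. G k * ennreal (1/m) \<partial>count_space UNIV)"
proof -
  have "(\<integral>\<^sup>+x. G (kap m s x) \<partial>lborel) =
      (\<integral>\<^sup>+x. \<integral>\<^sup>+k. G k * indicator {x. kap m s x = k} x \<partial>count_space UNIV \<partial>lborel)"
  proof (rule nn_integral_cong)
    fix x
    have "(\<lambda>k. G k * indicator {x. kap m s x = k} x) = (\<lambda>k. G (kap m s x) * indicator {kap m s x} k)"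
      by (auto simp: indicator_def)
    then show "G (kap m s x) = (\<integral>\<^sup>+k. G k * indicator {x. kap m s x = k} x \<partial>count_space UNIV)"
      by (simp add: nn_cs_point)
  qed
  also have "\<dots> = (\<integral>\<^sup>+k. \<integral>\<^sup>+x. G k * indicator {x. kap m s x = k} x \<partial>lborel \<partial>count_space UNIV)"
    by (rule nn_integral_count_space_nn_integral) auto
  also have "\<dots> = (\<integral>\<^sup>+k. G k * ennreal (1/m) \<partial>count_space UNIV)"
    using assms by (simp add: nn_integral_cmult_indicator cell_measure)
  finally show ?thesis .
qed

definition qr :: "(real \<Rightarrow> real) \<Rightarrow> real \<Rightarrow> real \<Rightarrow> int \<Rightarrow> real" where
  "qr p m s k = enn2real (qn p m s k)"

locale qsetup = prob_space M for M :: "'a measure" +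
  fixes X :: "'a \<Rightarrow> real" and p :: "real \<Rightarrow> real"
  assumes p_nonneg: "\<And>x. p x \<ge> 0"
    and distr: "distributed M lborel X (\<lambda>x. ennreal (p x))"
begin

lemma p_meas[measurable]: "p \<in> borel_measurable lborel"
  using distributed_real_measurable[OF _ distr] p_nonneg by auto

lemma p_meas'[measurable]: "p \<in> borel_measurable borel"
  using p_meas by simp

lemma X_meas[measurable]: "X \<in> measurable M lborel"
  using distributed_measurable[OF distr] .

lemma p_total: "(\<integral>\<^sup>+x. ennreal (p x) \<partial>lborel) = 1"
proof -
  have "emeasure M (X -` UNIV \<inter> space M) = (\<integral>\<^sup>+x. ennreal (p x) * indicator UNIV x \<partial>lborel)"
    by (rule distributed_emeasure[OF distr]) auto
  then show ?thesis by (simp add: emeasure_space_1)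
qed

lemma weighted_sum:
  fixes G :: "int \<Rightarrow> ennreal"
  shows "(\<integral>\<^sup>+x. ennreal (p x) * G (kap m s x) \<partial>lborel) = (\<integral>\<^sup>+k. qn p m s k * G k \<partial>count_space UNIV)"
proof -
  have "(\<integral>\<^sup>+x. ennreal (p x) * G (kap m s x) \<partial>lborel) =
      (\<integral>\<^sup>+x. \<integral>\<^sup>+k. ennreal (p x) * indicator {x. kap m s x = k} x * G k \<partial>count_space UNIV \<partial>lborel)"
  proof (rule nn_integral_cong)
    fix x
    have "(\<lambda>k. ennreal (p x) * indicator {x. kap m s x = k} x * G k) = (\<lambda>k. (ennreal (p x) * G (kap m s x)) * indicator {kap m s x} k)"
      by (auto simp: indicator_def)
    then show "ennreal (p x) * G (kap m s x) = (\<integral>\<^sup>+k. ennreal (p x) * indicator {x. kap m s x = k} x * G k \<partial>count_space UNIV)"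
      by (simp add: nn_cs_point)
  qed
  also have "\<dots> = (\<integral>\<^sup>+k. \<integral>\<^sup>+x. ennreal (p x) * indicator {x. kap m s x = k} x * G k \<partial>lborel \<partial>count_space UNIV)"
    by (rule nn_integral_count_space_nn_integral) auto
  also have "\<dots> = (\<integral>\<^sup>+k. qn p m s k * G k \<partial>count_space UNIV)"
    by (simp add: nn_integral_multc qn_def)
  finally show ?thesis .
qed



lemma qn_le1: "qn p m s k \<le> 1"
proof -
  have "qn p m s k \<le> (\<integral>\<^sup>+x. ennreal (p x) \<partial>lborel)"
    unfolding qn_def by (intro nn_integral_mono) (auto simp: indicator_def)
  then show ?thesis using p_total by simp
qed

lemma qn_eq: "qn p m s k = ennreal (qr p m s k)"
  using qn_le1[of m s k] unfolding qr_def
  by (metis ennreal_enn2real ennreal_one_less_top le_less_trans less_top)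

lemma qr_nonneg: "qr p m s k \<ge> 0" unfolding qr_def by simp

lemma qr_le1: "qr p m s k \<le> 1"
  using qn_le1[of m s k] qn_eq[of m s k] by simp

lemma quant_kap: "quant m (x + s) = real_of_int (kap m s x) / m"
  unfolding quant_def kap_def by simp

lemma term_at:
  assumes "m > 0"
  shows "disc_entropy_term M (\<lambda>\<omega>. quant m (X \<omega> + s)) (real_of_int k / m) = - qr p m s k * ln (qr p m s k)"
proof -
  have "{\<omega> \<in> space M. quant m (X \<omega> + s) = real_of_int k / m} = X -` {x. kap m s x = k} \<inter> space M"
    using assms by (auto simp: quant_kap)
  moreover have "emeasure M (X -` {x. kap m s x = k} \<inter> space M) = qn p m s k"
    unfolding qn_def by (rule distributed_emeasure[OF distr]) simp
  ultimately have "measure M {\<omega> \<in> space M. quant m (X \<omega> + s) = real_of_int k / m} = qr p m s k"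
    by (simp add: measure_def qr_def)
  then show ?thesis unfolding disc_entropy_term_def by simp
qed

lemma term_off:
  assumes "m > 0" "y \<notin> range (\<lambda>k::int. real_of_int k / m)"
  shows "disc_entropy_term M (\<lambda>\<omega>. quant m (X \<omega> + s)) y = 0"
proof -
  have E: "{\<omega> \<in> space M. quant m (X \<omega> + s) = y} = {}"
    using assms by (auto simp: quant_kap)
  show ?thesis unfolding disc_entropy_term_def E by simp
qed

definition Ent :: "real \<Rightarrow> real \<Rightarrow> ennreal" where
  "Ent m s = (\<integral>\<^sup>+x. ennreal (p x) * ennreal (- ln (qr p m s (kap m s x))) \<partial>lborel)"

lemma ent_link:
  assumes "m > 0"
  shows "disc_entropy_finite M (\<lambda>\<omega>. quant m (X \<omega> + s)) \<longleftrightarrow> Ent m s < \<infinity>"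
    and "disc_entropy M (\<lambda>\<omega>. quant m (X \<omega> + s)) = enn2real (Ent m s)"
proof -
  define T where "T = disc_entropy_term M (\<lambda>\<omega>. quant m (X \<omega> + s))"
  define g where "g k = - qr p m s k * ln (qr p m s k)" for k
  define h where "h = (\<lambda>k::int. real_of_int k / m)"
  have inj: "inj_on h UNIV" using assms unfolding h_def by (auto simp: inj_on_def)
  have Tg: "T \<circ> h = g" unfolding T_def g_def h_def using term_at[OF assms] by (auto simp: fun_eq_iff)
  have S1: "T summable_on UNIV \<longleftrightarrow> T summable_on range h"
    by (rule summable_on_cong_neutral) (use term_off[OF assms] in \<open>auto simp: T_def h_def\<close>)
  have I1: "infsum T UNIV = infsum T (range h)"
    by (rule infsum_cong_neutral) (use term_off[OF assms] in \<open>auto simp: T_def h_def\<close>)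
  have S2: "T summable_on range h \<longleftrightarrow> g summable_on UNIV"
    using summable_on_reindex[OF inj, of T] Tg by simp
  have I2: "infsum T (range h) = infsum g UNIV"
    using infsum_reindex[OF inj, of T] Tg by simp
  have gnn: "g k \<ge> 0" for k
  proof -
    have "ln (qr p m s k) \<le> 0"
      using qr_le1[of m s k] qr_nonneg[of m s k]
      by (cases "qr p m s k = 0") auto
    then show ?thesis unfolding g_def using qr_nonneg[of m s k] by (simp add: mult_nonneg_nonpos)
  qed
  have gE: "(\<integral>\<^sup>+k. ennreal (g k) \<partial>count_space UNIV) = Ent m s"
  proof -
    have "(\<integral>\<^sup>+k. ennreal (g k) \<partial>count_space UNIV) =
          (\<integral>\<^sup>+k. qn p m s k * ennreal (- ln (qr p m s k)) \<partial>count_space UNIV)"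
    proof (rule nn_integral_cong)
      fix k
      have "ln (qr p m s k) \<le> 0"
        using qr_le1[of m s k] qr_nonneg[of m s k]
        by (cases "qr p m s k = 0") auto
      then show "ennreal (g k) = qn p m s k * ennreal (- ln (qr p m s k))"
        unfolding g_def qn_eq using qr_nonneg[of m s k] by (subst ennreal_mult[symmetric]) auto
    qed
    also have "\<dots> = Ent m s" unfolding Ent_def by (rule weighted_sum[symmetric])
    finally show ?thesis .
  qed
  show "disc_entropy_finite M (\<lambda>\<omega>. quant m (X \<omega> + s)) \<longleftrightarrow> Ent m s < \<infinity>"
    unfolding disc_entropy_finite_def T_def[symmetric] S1 S2 nn_sum_bridge[of g, OF gnn] gE ..
  show "disc_entropy M (\<lambda>\<omega>. quant m (X \<omega> + s)) = enn2real (Ent m s)"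
  proof (cases "Ent m s < \<infinity>")
    case True
    then have "g summable_on UNIV" using nn_sum_bridge[of g, OF gnn] gE by simp
    then show ?thesis unfolding disc_entropy_def T_def[symmetric] I1 I2 using nn_sum_bridge2[of g, OF gnn] gE by simp
  next
    case False
    then have "\<not> g summable_on UNIV" using nn_sum_bridge[of g, OF gnn] gE by simp
    then have "infsum g UNIV = 0" by (simp add: infsum_not_exists)
    moreover have "Ent m s = top" using False by (simp add: not_less top_unique)
    ultimately show ?thesis unfolding disc_entropy_def T_def[symmetric] I1 I2 by simp
  qed
qed


lemma comp_kap_meas[measurable]: "(\<lambda>x. G (kap m s x)) \<in> borel_measurable lborel"
  by (rule measurable_compose[OF kap_meas']) simp

definition pm :: "real \<Rightarrow> real \<Rightarrow> real \<Rightarrow> real" where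
  "pm m s x = m * qr p m s (kap m s x)"

lemma pm_meas[measurable]: "pm m s \<in> borel_measurable lborel"
  unfolding pm_def by measurable

lemma pm_nonneg: "m \<ge> 0 \<Longrightarrow> pm m s x \<ge> 0"
  unfolding pm_def using qr_nonneg by simp

lemma F2:
  fixes G :: "int \<Rightarrow> real"
  assumes "m > 0" "\<And>k. G k \<ge> 0"
  shows "(\<integral>\<^sup>+x. ennreal (p x * G (kap m s x)) \<partial>lborel) = (\<integral>\<^sup>+x. ennreal (pm m s x * G (kap m s x)) \<partial>lborel)"
proof -
  have "(\<integral>\<^sup>+x. ennreal (p x * G (kap m s x)) \<partial>lborel) = (\<integral>\<^sup>+x. ennreal (p x) * ennreal (G (kap m s x)) \<partial>lborel)"
    using p_nonneg assms(2) by (simp add: ennreal_mult)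
  also have "\<dots> = (\<integral>\<^sup>+k. qn p m s k * ennreal (G k) \<partial>count_space UNIV)"
    by (rule weighted_sum)
  also have "\<dots> = (\<integral>\<^sup>+k. ennreal (m * qr p m s k * G k) * ennreal (1/m) \<partial>count_space UNIV)"
  proof (rule nn_integral_cong)
    fix k
    have nn: "0 \<le> m * qr p m s k * G k" "0 \<le> 1/m" using assms qr_nonneg[of m s k] by auto
    have eq: "m * qr p m s k * G k * (1/m) = qr p m s k * G k" using assms by (simp add: field_simps)
    have "ennreal (m * qr p m s k * G k) * ennreal (1/m) = ennreal (qr p m s k * G k)"
      using ennreal_mult[OF nn, symmetric] eq by simp
    then show "qn p m s k * ennreal (G k) = ennreal (m * qr p m s k * G k) * ennreal (1/m)"
      using qr_nonneg[of m s k] assms(2)[of k] by (simp add: qn_eq ennreal_mult)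
  qed
  also have "\<dots> = (\<integral>\<^sup>+x. ennreal (m * qr p m s (kap m s x) * G (kap m s x)) \<partial>lborel)"
    by (rule step_integral[OF assms(1), symmetric])
  also have "\<dots> = (\<integral>\<^sup>+x. ennreal (pm m s x * G (kap m s x)) \<partial>lborel)"
    unfolding pm_def ..
  finally show ?thesis .
qed

lemma pos_qr:
  assumes "m > 0"
  shows "AE x in lborel. p x > 0 \<longrightarrow> qr p m s (kap m s x) > 0"
proof -
  define G where "G k = (if qr p m s k = 0 then 1 else (0::real))" for k
  have "(\<integral>\<^sup>+x. ennreal (p x * G (kap m s x)) \<partial>lborel) = (\<integral>\<^sup>+x. ennreal (pm m s x * G (kap m s x)) \<partial>lborel)"
    by (rule F2[OF assms]) (simp add: G_def)
  also have "\<dots> = 0"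
  proof -
    have z: "\<And>x. ennreal (pm m s x * G (kap m s x)) = 0" by (simp add: G_def pm_def)
    show ?thesis by (simp add: z)
  qed
  finally have "AE x in lborel. ennreal (p x * G (kap m s x)) = 0"
    by (subst (asm) nn_integral_0_iff_AE) auto
  then show ?thesis
    by eventually_elim (use qr_nonneg[of m s] in \<open>force simp: G_def less_le split: if_splits\<close>)
qed

lemma pm_total:
  assumes "m > 0"
  shows "(\<integral>\<^sup>+x. ennreal (pm m s x) \<partial>lborel) = 1" "integrable lborel (pm m s)" "integral\<^sup>L lborel (pm m s) = 1"
proof -
  have "(\<integral>\<^sup>+x. ennreal (p x * 1) \<partial>lborel) = (\<integral>\<^sup>+x. ennreal (pm m s x * 1) \<partial>lborel)"
    by (rule F2[OF assms]) simp
  then show 1: "(\<integral>\<^sup>+x. ennreal (pm m s x) \<partial>lborel) = 1" using p_total by simp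
  show 2: "integrable lborel (pm m s)"
    by (rule integrableI_nonneg) (use 1 pm_nonneg assms in auto)
  show "integral\<^sup>L lborel (pm m s) = 1"
    by (subst integral_eq_nn_integral) (use 1 pm_nonneg assms in auto)
qed

lemma p_integrable: "integrable lborel p" and p_integral: "integral\<^sup>L lborel p = 1"
proof -
  show "integrable lborel p"
    by (rule integrableI_nonneg) (use p_total p_nonneg in auto)
  show "integral\<^sup>L lborel p = 1"
    by (subst integral_eq_nn_integral) (use p_total p_nonneg in auto)
qed


definition w :: "real \<Rightarrow> real" where "w x = qr p 1 0 (kap 1 0 x)"
definition Vb :: "real \<Rightarrow> real \<Rightarrow> int \<Rightarrow> real" where
  "Vb m s k = (\<Sum>i\<in>{-1..1::int}. qr p 1 0 (kap 1 0 (real_of_int k / m - s) + i))"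
definition U :: "real \<Rightarrow> real" where
  "U x = (\<Sum>i\<in>{-2..2::int}. qr p 1 0 (kap 1 0 x + i))"

lemma kap1: "kap 1 0 y = \<lfloor>1/2 + y\<rfloor>" unfolding kap_def by simp

lemma kap1_shift: "kap 1 0 (y + real_of_int i) = kap 1 0 y + i"
  unfolding kap1 by (metis add.assoc floor_add_int)

lemma floor_close:
  fixes a b :: real
  assumes "\<bar>a - b\<bar> < 1"
  shows "\<lfloor>a\<rfloor> - \<lfloor>b\<rfloor> \<in> {-1..1::int}"
proof -
  have "\<lfloor>a\<rfloor> \<le> \<lfloor>b\<rfloor> + 1"
  proof -
    have "real_of_int \<lfloor>a\<rfloor> < real_of_int \<lfloor>b\<rfloor> + 2"
      using assms of_int_floor_le[of a] real_of_int_floor_gt_diff_one[of b] by linarith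
    then show ?thesis by linarith
  qed
  moreover have "\<lfloor>b\<rfloor> \<le> \<lfloor>a\<rfloor> + 1"
  proof -
    have "real_of_int \<lfloor>b\<rfloor> < real_of_int \<lfloor>a\<rfloor> + 2"
      using assms of_int_floor_le[of b] real_of_int_floor_gt_diff_one[of a] by linarith
    then show ?thesis by linarith
  qed
  ultimately show ?thesis by auto
qed

lemma kap1_close:
  assumes "\<bar>y - z\<bar> < 1"
  shows "kap 1 0 y - kap 1 0 z \<in> {-1..1::int}"
  unfolding kap1 by (rule floor_close) (use assms in auto)

lemma cell_center:
  assumes "m \<ge> 1" "kap m s y = k"
  shows "\<bar>y - (real_of_int k / m - s)\<bar> \<le> 1/2"
proof -
  have "y \<in> {(k - 1/2)/m - s ..< (k + 1/2)/m - s}"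
    using assms cell_eq[of m s k] by auto
  then have y1: "(k - 1/2)/m - s \<le> y" and y2: "y < (k + 1/2)/m - s" by auto
  have e1: "(k - 1/2)/m - s = (k/m - s) - 1/(2*m)" and e2: "(k + 1/2)/m - s = (k/m - s) + 1/(2*m)"
    using assms by (simp_all add: field_simps)
  have a1: "y - (k/m - s) \<ge> -(1/(2*m))" using y1 e1 by linarith
  have a2: "y - (k/m - s) \<le> 1/(2*m)" using y2 e2 by linarith
  have "\<bar>y - (real_of_int k / m - s)\<bar> \<le> 1/(2*m)"
    by (rule abs_leI) (use a1 a2 in linarith)+
  also have "\<dots> \<le> 1/2" using assms by (simp add: field_simps)
  finally show ?thesis .
qed

lemma w_le_Vb:
  assumes "m \<ge> 1" "kap m s y = k"
  shows "w y \<le> Vb m s k"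
proof -
  define c where "c = real_of_int k / m - s"
  have "\<bar>y - c\<bar> < 1" using cell_center[OF assms] unfolding c_def by simp
  then have d: "kap 1 0 y - kap 1 0 c \<in> {-1..1::int}" by (rule kap1_close)
  have "w y = qr p 1 0 (kap 1 0 c + (kap 1 0 y - kap 1 0 c))" unfolding w_def by simp
  also have "\<dots> \<le> (\<Sum>i\<in>{-1..1::int}. qr p 1 0 (kap 1 0 c + i))"
    by (rule member_le_sum[OF d]) (auto simp: qr_nonneg)
  finally show ?thesis unfolding Vb_def c_def .
qed

lemma w_nonneg: "w x \<ge> 0" unfolding w_def by (rule qr_nonneg)
lemma w_le1: "w x \<le> 1" unfolding w_def by (rule qr_le1)

lemma Vb_nonneg: "Vb m s k \<ge> 0" unfolding Vb_def by (intro sum_nonneg) (auto simp: qr_nonneg)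

lemma Vb_le_U:
  assumes "m \<ge> 1" "kap m s x = k"
  shows "Vb m s k \<le> U x"
proof -
  define c where "c = real_of_int k / m - s"
  have "\<bar>c - x\<bar> < 1" using cell_center[OF assms] abs_minus_commute[of x c] unfolding c_def by linarith
  then have d: "kap 1 0 c - kap 1 0 x \<in> {-1..1::int}" by (rule kap1_close)
  define d' where "d' = kap 1 0 c - kap 1 0 x"
  have "Vb m s k = (\<Sum>i\<in>{-1..1::int}. qr p 1 0 (kap 1 0 x + (d' + i)))"
    unfolding Vb_def c_def[symmetric] d'_def by (simp add: algebra_simps)
  also have "\<dots> = (\<Sum>j\<in>(\<lambda>i. d' + i) ` {-1..1::int}. qr p 1 0 (kap 1 0 x + j))"
    by (subst sum.reindex) (auto simp: inj_on_def)
  also have "\<dots> \<le> (\<Sum>j\<in>{-2..2::int}. qr p 1 0 (kap 1 0 x + j))"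
    by (rule sum_mono2) (use d in \<open>auto simp: d'_def qr_nonneg\<close>)
  finally show ?thesis unfolding U_def .
qed

lemma w_meas[measurable]: "w \<in> borel_measurable lborel"
  unfolding w_def by measurable

lemma w_meas'[measurable]: "w \<in> borel_measurable borel"
  using w_meas by simp

lemma w_total: "(\<integral>\<^sup>+x. ennreal (w x) \<partial>lborel) = 1"
proof -
  have "(\<integral>\<^sup>+x. ennreal (w x) \<partial>lborel) = (\<integral>\<^sup>+k. ennreal (qr p 1 0 k) * ennreal (1/1) \<partial>count_space UNIV)"
    unfolding w_def by (rule step_integral) simp
  also have "\<dots> = (\<integral>\<^sup>+k. qn p 1 0 k * 1 \<partial>count_space UNIV)" by (simp add: qn_eq)
  also have "\<dots> = (\<integral>\<^sup>+x. ennreal (p x) * 1 \<partial>lborel)" by (rule weighted_sum[symmetric])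
  finally show ?thesis using p_total by simp
qed

lemma w_integrable: "integrable lborel w"
  by (rule integrableI_nonneg) (use w_total w_nonneg in auto)

lemma w_shift_integrable: "integrable lborel (\<lambda>x. w (x + real_of_int i))"
proof (rule integrableI_nonneg)
  show "(\<lambda>x. w (x + real_of_int i)) \<in> borel_measurable lborel" by measurable
  show "AE x in lborel. 0 \<le> w (x + real_of_int i)" by (simp add: w_nonneg)
  have "(\<integral>\<^sup>+x. ennreal (w x) \<partial>lborel) = (\<integral>\<^sup>+x. ennreal (w (real_of_int i + 1 * x)) \<partial>lborel)"
    using nn_integral_real_affine[of "\<lambda>x. ennreal (w x)" 1 "real_of_int i"] by simp
  then show "(\<integral>\<^sup>+x. ennreal (w (x + real_of_int i)) \<partial>lborel) < \<infinity>"
    using w_total by (simp add: add.commute)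
qed

lemma U_alt: "U x = (\<Sum>i\<in>{-2..2::int}. w (x + real_of_int i))"
  unfolding U_def w_def kap1_shift ..

lemma U_integrable: "integrable lborel U"
  unfolding U_alt by (rule Bochner_Integration.integrable_sum) (rule w_shift_integrable)

lemma U_meas[measurable]: "U \<in> borel_measurable lborel"
  using U_integrable by auto

lemma U_nonneg: "U x \<ge> 0" unfolding U_def by (intro sum_nonneg) (auto simp: qr_nonneg)


definition Bm :: "real \<Rightarrow> real \<Rightarrow> real \<Rightarrow> real" where
  "Bm m s x = p x * (Vb m s (kap m s x) / (m * qr p m s (kap m s x)))"

definition Am :: "real \<Rightarrow> real \<Rightarrow> real \<Rightarrow> real" where
  "Am m s x = p x * (- ln (qr p m s (kap m s x)))"

lemma Bm_meas[measurable]: "Bm m s \<in> borel_measurable lborel"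
  unfolding Bm_def by measurable

lemma Am_meas[measurable]: "Am m s \<in> borel_measurable lborel"
  unfolding Am_def by measurable

lemma Bm_nonneg: "m \<ge> 0 \<Longrightarrow> Bm m s x \<ge> 0"
  unfolding Bm_def using p_nonneg Vb_nonneg qr_nonneg by (simp add: divide_nonneg_nonneg)

lemma Am_nonneg: "Am m s x \<ge> 0"
proof -
  have "ln (qr p m s (kap m s x)) \<le> 0"
    using qr_le1[of m s "kap m s x"] qr_nonneg[of m s "kap m s x"]
    by (cases "qr p m s (kap m s x) = 0") auto
  then show ?thesis unfolding Am_def using p_nonneg[of x] by (simp add: mult_nonneg_nonpos)
qed

lemma Bm_bound:
  fixes T :: "int \<Rightarrow> real"
  assumes m: "m \<ge> 1" and T: "\<And>k. 0 \<le> T k" "\<And>k. T k \<le> 1"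
  shows "integrable lborel (\<lambda>x. T (kap m s x) * Bm m s x)"
    and "(\<integral>x. T (kap m s x) * Bm m s x \<partial>lborel) \<le> (\<integral>x. T (kap m s x) * U x \<partial>lborel)"
proof -
  have m0: "m > 0" using m by simp
  define G where "G k = T k * (Vb m s k / (m * qr p m s k))" for k
  have G0: "G k \<ge> 0" for k unfolding G_def using T Vb_nonneg qr_nonneg m0 by (simp add: divide_nonneg_nonneg)
  have eq1: "T (kap m s x) * Bm m s x = p x * G (kap m s x)" for x
    unfolding G_def Bm_def by (simp add: algebra_simps)
  have TU_int: "integrable lborel (\<lambda>x. T (kap m s x) * U x)"
  proof (rule Bochner_Integration.integrable_bound[OF U_integrable])
    show "(\<lambda>x. T (kap m s x) * U x) \<in> borel_measurable lborel" by measurable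
    have "norm (T (kap m s x) * U x) \<le> norm (U x)" for x
      using T[of "kap m s x"] U_nonneg[of x] by (simp add: abs_mult mult_left_le_one_le)
    then show "AE x in lborel. norm (T (kap m s x) * U x) \<le> norm (U x)" by simp
  qed
  have le: "pm m s x * G (kap m s x) \<le> T (kap m s x) * U x" for x
  proof (cases "qr p m s (kap m s x) = 0")
    case True then show ?thesis using T U_nonneg by (simp add: pm_def G_def)
  next
    case False
    then have "pm m s x * G (kap m s x) = T (kap m s x) * Vb m s (kap m s x)"
      unfolding pm_def G_def using m0 by (simp add: field_simps)
    also have "\<dots> \<le> T (kap m s x) * U x"
      using Vb_le_U[OF m, of s x "kap m s x"] T(1)[of "kap m s x"] by (simp add: mult_left_mono)
    finally show ?thesis .
  qed
  have nn: "(\<integral>\<^sup>+x. ennreal (T (kap m s x) * Bm m s x) \<partial>lborel) \<le> (\<integral>\<^sup>+x. ennreal (T (kap m s x) * U x) \<partial>lborel)"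
  proof -
    have "(\<integral>\<^sup>+x. ennreal (T (kap m s x) * Bm m s x) \<partial>lborel) = (\<integral>\<^sup>+x. ennreal (p x * G (kap m s x)) \<partial>lborel)"
      unfolding eq1 ..
    also have "\<dots> = (\<integral>\<^sup>+x. ennreal (pm m s x * G (kap m s x)) \<partial>lborel)"
      by (rule F2[OF m0 G0])
    also have "\<dots> \<le> (\<integral>\<^sup>+x. ennreal (T (kap m s x) * U x) \<partial>lborel)"
      by (intro nn_integral_mono ennreal_leI le)
    finally show ?thesis .
  qed
  have fin: "(\<integral>\<^sup>+x. ennreal (T (kap m s x) * U x) \<partial>lborel) < \<infinity>"
    using TU_int by (simp add: integrable_iff_bounded) (metis (no_types, lifting) T(1) U_nonneg abs_of_nonneg mult_nonneg_nonneg nn_integral_cong)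
  have nnT: "0 \<le> T (kap m s x) * Bm m s x" for x using T Bm_nonneg m0 by simp
  show int: "integrable lborel (\<lambda>x. T (kap m s x) * Bm m s x)"
    by (rule integrableI_nonneg) (use nn fin nnT in auto)
  show "(\<integral>x. T (kap m s x) * Bm m s x \<partial>lborel) \<le> (\<integral>x. T (kap m s x) * U x \<partial>lborel)"
  proof -
    have "(\<integral>x. T (kap m s x) * Bm m s x \<partial>lborel) = enn2real (\<integral>\<^sup>+x. ennreal (T (kap m s x) * Bm m s x) \<partial>lborel)"
      by (rule integral_eq_nn_integral) (use nnT in auto)
    also have "\<dots> \<le> enn2real (\<integral>\<^sup>+x. ennreal (T (kap m s x) * U x) \<partial>lborel)"
      using nn fin by (intro enn2real_mono) auto
    also have "\<dots> = (\<integral>x. T (kap m s x) * U x \<partial>lborel)"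
      by (rule integral_eq_nn_integral[symmetric]) (use T U_nonneg in auto)
    finally show ?thesis .
  qed
qed

end

locale qsetup2 = qsetup +
  fixes L :: real
  assumes L1: "L \<ge> 1" and bnd: "AE x in lborel. p x \<le> L"
    and Efin: "Ent 1 0 < \<infinity>"
begin

lemma qr_le_L:
  assumes "m > 0"
  shows "qr p m s k \<le> L / m"
proof -
  have "qn p m s k \<le> (\<integral>\<^sup>+x. ennreal L * indicator {x. kap m s x = k} x \<partial>lborel)"
    unfolding qn_def by (intro nn_integral_mono_AE) (use bnd in \<open>eventually_elim, auto simp: indicator_def intro: ennreal_leI\<close>)
  also have "\<dots> = ennreal L * ennreal (1/m)"
    using assms by (subst nn_integral_cmult_indicator) (auto simp: cell_measure)
  also have "\<dots> = ennreal (L/m)" using L1 assms by (simp add: ennreal_mult[symmetric])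
  finally show ?thesis using assms L1 by (simp add: qn_eq)
qed

lemma pm_le_L: "m > 0 \<Longrightarrow> pm m s x \<le> L"
  unfolding pm_def using qr_le_L[of m s "kap m s x"] by (simp add: field_simps)

lemma wlog_nonneg: "p x * (- ln (w x)) \<ge> 0"
  using Am_nonneg[of 1 0 x] unfolding Am_def w_def .

lemma wlog_int: "integrable lborel (\<lambda>x. p x * (- ln (w x)))"
proof (rule integrableI_nonneg)
  show "(\<lambda>x. p x * - ln (w x)) \<in> borel_measurable lborel" by measurable
  show "AE x in lborel. 0 \<le> p x * - ln (w x)" using wlog_nonneg by simp
  have "(\<integral>\<^sup>+x. ennreal (p x * - ln (w x)) \<partial>lborel) = Ent 1 0"
    unfolding Ent_def w_def using p_nonneg Am_nonneg[of 1 0] unfolding Am_def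
    by (intro nn_integral_cong) (metis ennreal_mult' mult_nonneg_nonneg w_def wlog_nonneg)
  then show "(\<integral>\<^sup>+x. ennreal (p x * - ln (w x)) \<partial>lborel) < \<infinity>" using Efin by simp
qed

lemma gibbs:
  assumes m: "m \<ge> 1"
  shows "AE x in lborel. Am m s x \<le> p x * ln m + p x * (- ln (w x)) + Bm m s x"
proof -
  have m0: "m > 0" using m by simp
  show ?thesis using pos_qr[OF m0, of s] pos_qr[of 1 0, OF zero_less_one]
proof (eventually_elim)
  case (elim x)
  show ?case
  proof (cases "p x > 0")
    case False
    then have "p x = 0" using p_nonneg[of x] by simp
    then show ?thesis by (simp add: Am_def Bm_def)
  next
    case True
    define q where "q = qr p m s (kap m s x)"
    define v where "v = Vb m s (kap m s x)"
    have q0: "q > 0" using elim True unfolding q_def by simp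
    have w0: "w x > 0" using elim True unfolding w_def by simp
    have wv: "w x \<le> v" unfolding v_def by (rule w_le_Vb[OF m refl])
    have v0: "v > 0" using w0 wv by simp
    have "ln (v / (m * q)) \<le> v / (m*q) - 1"
      by (rule ln_le_minus_one) (use v0 q0 m in simp)
    moreover have "ln (v / (m * q)) = ln v - ln m - ln q"
      using v0 q0 m by (simp add: ln_div ln_mult)
    moreover have "ln (w x) \<le> ln v" using w0 wv by simp
    ultimately have ineq: "- ln q \<le> ln m + (- ln (w x)) + v / (m * q)" by linarith
    have "p x * (- ln q) \<le> p x * (ln m + (- ln (w x)) + v / (m * q))"
      by (rule mult_left_mono[OF ineq]) (use True in simp)
    then show ?thesis unfolding Am_def Bm_def q_def[symmetric] v_def[symmetric] by (simp add: algebra_simps)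
  qed
qed
qed

lemma Am_int:
  assumes m: "m \<ge> 1"
  shows "integrable lborel (Am m s)"
proof -
  have Bi: "integrable lborel (Bm m s)"
    using Bm_bound(1)[OF m, of "\<lambda>_. 1" s] by simp
  have "integrable lborel (\<lambda>x. p x * ln m + p x * (- ln (w x)) + Bm m s x)"
    using p_integrable wlog_int Bi by auto
  then show ?thesis
    by (rule Bochner_Integration.integrable_bound) (use gibbs[OF m, of s] Am_nonneg in \<open>auto elim!: eventually_mono\<close>)
qed

lemma Ent_fin:
  assumes m: "m \<ge> 1"
  shows "Ent m s = ennreal (integral\<^sup>L lborel (Am m s))"
proof -
  have "Ent m s = (\<integral>\<^sup>+x. ennreal (Am m s x) \<partial>lborel)"
    unfolding Ent_def Am_def using p_nonneg Am_nonneg[of m s] unfolding Am_def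
    by (intro nn_integral_cong) (metis ennreal_mult' mult_nonneg_nonneg Am_def Am_nonneg)
  also have "\<dots> = ennreal (integral\<^sup>L lborel (Am m s))"
    by (rule nn_integral_eq_integral[OF Am_int[OF m]]) (simp add: Am_nonneg)
  finally show ?thesis .
qed


end

locale qsetup3 = qsetup2 +
  assumes plnp: "integrable lborel (\<lambda>x. p x * \<bar>ln (p x)\<bar>)"
    and cont: "AE x in lborel. isCont p x"
begin

lemma plnp_int: "integrable lborel (\<lambda>x. p x * ln (p x))"
  by (rule Bochner_Integration.integrable_bound[OF plnp]) (auto simp: abs_mult p_nonneg)

lemma plnp_abs_int: "integrable lborel (\<lambda>x. \<bar>p x * ln (p x)\<bar>)"
  using plnp by (simp add: abs_mult p_nonneg)

definition D :: "real \<Rightarrow> real \<Rightarrow> real \<Rightarrow> real" where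
  "D m s x = Am m s x - p x * ln m + p x * ln (p x)"

lemma D_int: "m \<ge> 1 \<Longrightarrow> integrable lborel (D m s)"
  unfolding D_def using Am_int[of m s] p_integrable plnp_int by auto

lemma D_meas[measurable]: "D m s \<in> borel_measurable lborel"
  unfolding D_def by measurable

lemma D_lower:
  assumes m: "m \<ge> 1"
  shows "integral\<^sup>L lborel (D m s) \<ge> 0"
proof -
  have m0: "m > 0" using m by simp
  have ae: "AE x in lborel. p x - pm m s x \<le> D m s x"
    using pos_qr[OF m0, of s]
  proof eventually_elim
    case (elim x)
    show ?case
    proof (cases "p x > 0")
      case False
      then have "p x = 0" using p_nonneg[of x] by simp
      then show ?thesis using pm_nonneg[of m s x] m0 by (simp add: D_def Am_def)
    next
      case True
      define q where "q = qr p m s (kap m s x)"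
      have q0: "q > 0" using elim True unfolding q_def by simp
      have pmq: "pm m s x = m * q" unfolding pm_def q_def ..
      have "ln (m * q / p x) \<le> m * q / p x - 1"
        by (rule ln_le_minus_one) (use q0 m0 True in simp)
      moreover have "ln (m * q / p x) = ln m + ln q - ln (p x)"
        using q0 m0 True by (simp add: ln_div ln_mult)
      ultimately have "ln m + ln q - ln (p x) \<le> m * q / p x - 1" by simp
      then have "p x * (ln m + ln q - ln (p x)) \<le> p x * (m * q / p x - 1)"
        by (rule mult_left_mono) (use True in simp)
      also have "\<dots> = m * q - p x" using True by (simp add: field_simps)
      finally have "p x * (ln m + ln q - ln (p x)) \<le> m * q - p x" .
      then show ?thesis unfolding D_def Am_def q_def[symmetric] pmq by (simp add: algebra_simps)
    qed
  qed
  have "0 = (\<integral>x. p x - pm m s x \<partial>lborel)"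
    using p_integral pm_total[OF m0, of s] p_integrable by simp
  also have "\<dots> \<le> integral\<^sup>L lborel (D m s)"
    by (rule integral_mono_AE[OF _ D_int[OF m] ae]) (use p_integrable pm_total[OF m0, of s] in auto)
  finally show ?thesis .
qed


lemma cell_center2:
  assumes "m > 0" "kap m s y = k"
  shows "\<bar>y - (real_of_int k / m - s)\<bar> \<le> 1/(2*m)"
proof -
  have "y \<in> {(k - 1/2)/m - s ..< (k + 1/2)/m - s}"
    using assms cell_eq[of m s k] by auto
  then have y1: "(k - 1/2)/m - s \<le> y" and y2: "y < (k + 1/2)/m - s" by auto
  have e1: "(k - 1/2)/m - s = (k/m - s) - 1/(2*m)" and e2: "(k + 1/2)/m - s = (k/m - s) + 1/(2*m)"
    using assms by (simp_all add: field_simps)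
  have a1: "y - (k/m - s) \<ge> -(1/(2*m))" using y1 e1 by linarith
  have a2: "y - (k/m - s) \<le> 1/(2*m)" using y2 e2 by linarith
  show ?thesis by (rule abs_leI) (use a1 a2 in linarith)+
qed

lemma same_cell:
  assumes "m > 0" "kap m s y = kap m s x"
  shows "\<bar>y - x\<bar> \<le> 1/m"
proof -
  have "\<bar>y - (real_of_int (kap m s x) / m - s)\<bar> \<le> 1/(2*m)" using cell_center2[OF assms] .
  moreover have "\<bar>x - (real_of_int (kap m s x) / m - s)\<bar> \<le> 1/(2*m)" using cell_center2[OF assms(1) refl] .
  ultimately have "\<bar>y - x\<bar> \<le> 1/(2*m) + 1/(2*m)" by linarith
  also have "\<dots> = 1/m" by simp
  finally show ?thesis .
qed

lemma pm_close:
  assumes "isCont p x" "e > 0"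
  obtains N where "N > 0" "\<And>m s. m \<ge> N \<Longrightarrow> \<bar>pm m s x - p x\<bar> \<le> e"
proof -
  obtain d where d: "d > 0" "\<And>y. dist y x < d \<Longrightarrow> dist (p y) (p x) < e"
    using assms unfolding continuous_at_eps_delta by blast
  have "\<bar>pm m s x - p x\<bar> \<le> e" if mN: "m \<ge> 2/d" for m s
  proof -
    have m0: "m > 0" using mN d by (smt (verit) divide_pos_pos)
    have md: "1/m < d"
    proof -
      have "2 \<le> m * d" using mN d by (simp add: divide_le_eq)
      then have "1/m \<le> d/2" using m0 by (simp add: field_simps)
      then show ?thesis using d by simp
    qed
    define k where "k = kap m s x"
    have close: "\<bar>p y - p x\<bar> < e" if "kap m s y = k" for y
    proof -
      have "\<bar>y - x\<bar> \<le> 1/m" using same_cell[OF m0, of s y x] that unfolding k_def by simp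
      then have "dist y x < d" using md by (simp add: dist_real_def)
      then show ?thesis using d(2) by (simp add: dist_real_def)
    qed
    have up: "qn p m s k \<le> ennreal ((p x + e) / m)"
    proof -
      have "qn p m s k \<le> (\<integral>\<^sup>+y. ennreal (p x + e) * indicator {y. kap m s y = k} y \<partial>lborel)"
        unfolding qn_def
      proof (intro nn_integral_mono)
        fix y
        show "ennreal (p y) * indicator {y. kap m s y = k} y \<le> ennreal (p x + e) * indicator {y. kap m s y = k} y"
        proof (cases "kap m s y = k")
          case True then have "p y \<le> p x + e" using close[of y] by linarith
          then show ?thesis using True by (simp add: ennreal_leI)
        qed simp
      qed
      also have "\<dots> = ennreal (p x + e) * ennreal (1/m)"
        using m0 by (subst nn_integral_cmult_indicator) (auto simp: cell_measure)
      also have "\<dots> = ennreal ((p x + e)/m)"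
        by (subst ennreal_mult[symmetric]) (use m0 assms(2) p_nonneg[of x] in auto)
      finally show ?thesis .
    qed
    have lo: "ennreal ((p x - e) / m) \<le> qn p m s k"
    proof (cases "p x - e \<ge> 0")
      case True
      have "ennreal ((p x - e) / m) = ennreal (p x - e) * ennreal (1/m)"
        using m0 True by (simp add: ennreal_mult[symmetric])
      also have "\<dots> = (\<integral>\<^sup>+y. ennreal (p x - e) * indicator {y. kap m s y = k} y \<partial>lborel)"
        using m0 by (subst nn_integral_cmult_indicator) (auto simp: cell_measure)
      also have "\<dots> \<le> qn p m s k"
        unfolding qn_def
      proof (intro nn_integral_mono)
        fix y
        show "ennreal (p x - e) * indicator {y. kap m s y = k} y \<le> ennreal (p y) * indicator {y. kap m s y = k} y"
        proof (cases "kap m s y = k")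
          case True then have "p x - e \<le> p y" using close[of y] by linarith
          then show ?thesis using True by (simp add: ennreal_leI)
        qed simp
      qed
      finally show ?thesis .
    next
      case False
      then have "ennreal ((p x - e) / m) = 0" using m0 by (simp add: ennreal_eq_0_iff divide_nonpos_pos)
      then show ?thesis by simp
    qed
    have q1: "qr p m s k \<le> (p x + e) / m"
      using up qn_eq[of m s k] assms(2) p_nonneg[of x] m0 by (simp add: ennreal_le_iff)
    have q2: "(p x - e) / m \<le> qr p m s k"
    proof (cases "p x - e \<ge> 0")
      case True
      then show ?thesis using lo qn_eq[of m s k] qr_nonneg[of m s k] m0 by (auto simp: ennreal_le_iff2 ennreal_le_iff)
    next
      case False
      then show ?thesis using qr_nonneg[of m s k] m0 by (smt (verit) divide_nonpos_pos)
    qed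
    have "pm m s x \<le> p x + e" using q1 m0 unfolding pm_def k_def[symmetric] by (simp add: field_simps)
    moreover have "p x - e \<le> pm m s x" using q2 m0 unfolding pm_def k_def[symmetric] by (simp add: field_simps)
    ultimately show ?thesis by linarith
  qed
  then show ?thesis using that[of "2/d"] d by auto
qed

lemma pm_tendsto:
  assumes "isCont p x"
  shows "(\<lambda>n. pm (real n) (c n) x) \<longlonglongrightarrow> p x"
proof (rule LIMSEQ_I)
  fix r :: real assume r: "r > 0"
  obtain N where N: "N > 0" "\<And>m s. m \<ge> N \<Longrightarrow> \<bar>pm m s x - p x\<bar> \<le> r/2"
    using pm_close[OF assms, of "r/2"] r by auto
  obtain n0 :: nat where n0: "N < real n0" using reals_Archimedean2 by blast
  have "norm (pm (real n) (c n) x - p x) < r" if "n \<ge> n0" for n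
  proof -
    have "real n \<ge> N" using n0 that by linarith
    then show ?thesis using N(2)[of "real n" "c n"] r by simp
  qed
  then show "\<exists>no. \<forall>n\<ge>no. norm (pm (real n) (c n) x - p x) < r" by blast
qed

definition chi :: "real \<Rightarrow> real \<Rightarrow> real \<Rightarrow> int \<Rightarrow> real" where
  "chi m s R k = (if \<bar>real_of_int k / m - s\<bar> \<le> R then 1 else 0)"

lemma eventually_small:
  assumes "g > 0"
  shows "eventually (\<lambda>n. real n \<ge> 1 \<and> 1/(2 * real n) < g) sequentially"
proof -
  obtain N :: nat where N: "1/g < real N" using reals_Archimedean2 by blast
  have "real n \<ge> 1 \<and> 1/(2 * real n) < g" if "n \<ge> N + 1" for n
  proof -
    have n1: "real n \<ge> 1" using that by simp
    have "1/g < real n" using N that by linarith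
    then have "1 < g * real n" using assms by (simp add: field_simps)
    then have "1/(2 * real n) < g" using n1 by (simp add: field_simps)
    then show ?thesis using n1 by simp
  qed
  then show ?thesis unfolding eventually_sequentially by blast
qed

lemma chi_tendsto:
  assumes "\<bar>x\<bar> \<noteq> R"
  shows "(\<lambda>n. chi (real n) (c n) R (kap (real n) (c n) x)) \<longlonglongrightarrow> indicator {x. \<bar>x\<bar> < R} x"
proof (cases "\<bar>x\<bar> < R")
  case True
  have "eventually (\<lambda>n. real n \<ge> 1 \<and> 1/(2 * real n) < R - \<bar>x\<bar>) sequentially"
    using eventually_small[of "R - \<bar>x\<bar>"] True by simp
    then have "eventually (\<lambda>n. chi (real n) (c n) R (kap (real n) (c n) x) = 1) sequentially"
  proof (elim eventually_mono, clarify)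
    fix n :: nat assume n: "real n \<ge> 1" "1/(2 * real n) < R - \<bar>x\<bar>"
    have "\<bar>x - (real_of_int (kap (real n) (c n) x) / real n - c n)\<bar> \<le> 1/(2 * real n)"
      by (rule cell_center2) (use n in auto)
    then have "\<bar>real_of_int (kap (real n) (c n) x) / real n - c n\<bar> \<le> R" using n by linarith
    then show "chi (real n) (c n) R (kap (real n) (c n) x) = 1" unfolding chi_def by simp
  qed
  then show ?thesis using True by (simp add: tendsto_eventually)
next
  case False
  then have F: "\<bar>x\<bar> > R" using assms by simp
  have "eventually (\<lambda>n. real n \<ge> 1 \<and> 1/(2 * real n) < \<bar>x\<bar> - R) sequentially"
    using eventually_small[of "\<bar>x\<bar> - R"] F by simp
    then have "eventually (\<lambda>n. chi (real n) (c n) R (kap (real n) (c n) x) = 0) sequentially"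
  proof (elim eventually_mono, clarify)
    fix n :: nat assume n: "real n \<ge> 1" "1/(2 * real n) < \<bar>x\<bar> - R"
    have "\<bar>x - (real_of_int (kap (real n) (c n) x) / real n - c n)\<bar> \<le> 1/(2 * real n)"
      by (rule cell_center2) (use n in auto)
    then have "\<not> \<bar>real_of_int (kap (real n) (c n) x) / real n - c n\<bar> \<le> R" using n by linarith
    then show "chi (real n) (c n) R (kap (real n) (c n) x) = 0" unfolding chi_def by simp
  qed
  then show ?thesis using False by (simp add: tendsto_eventually)
qed


definition F :: "real \<Rightarrow> real" where
  "F x = \<bar>p x * ln (p x)\<bar> + p x * (- ln (w x)) + U x"

lemma F_int: "integrable lborel F"
  unfolding F_def using plnp_abs_int wlog_int U_integrable by auto

lemma F_nonneg: "F x \<ge> 0"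
  unfolding F_def using wlog_nonneg[of x] U_nonneg[of x] by simp

definition E1 :: "real \<Rightarrow> real \<Rightarrow> real \<Rightarrow> real \<Rightarrow> real \<Rightarrow> real" where
  "E1 m s R \<delta> x = chi m s R (kap m s x) * (p x * (ln (p x) - ln (max (pm m s x) \<delta>)))"

lemma E1_meas[measurable]: "E1 m s R \<delta> \<in> borel_measurable lborel"
  unfolding E1_def by measurable

definition Eb :: "real \<Rightarrow> real \<Rightarrow> real \<Rightarrow> real" where
  "Eb R \<delta> x = indicator {x. \<bar>x\<bar> \<le> R + 1/2} x * (\<bar>p x * ln (p x)\<bar> + p x * (\<bar>ln \<delta>\<bar> + \<bar>ln (max L \<delta>)\<bar>))"

lemma Eb_int: "integrable lborel (Eb R \<delta>)"
proof -
  have "integrable lborel (\<lambda>x. (\<bar>p x * ln (p x)\<bar> + p x * (\<bar>ln \<delta>\<bar> + \<bar>ln (max L \<delta>)\<bar>)) * indicator {x. \<bar>x\<bar> \<le> R + 1/2} x)"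
    by (rule integrable_real_mult_indicator) (use plnp_abs_int p_integrable in auto)
  then show ?thesis unfolding Eb_def by (simp add: mult.commute)
qed

lemma chi_01: "0 \<le> chi m s R k" "chi m s R k \<le> 1"
  unfolding chi_def by auto

lemma chi_in:
  assumes "m \<ge> 1" "chi m s R (kap m s x) \<noteq> 0"
  shows "\<bar>x\<bar> \<le> R + 1/2"
proof -
  have "\<bar>real_of_int (kap m s x) / m - s\<bar> \<le> R" using assms(2) unfolding chi_def by (auto split: if_splits)
  moreover have "\<bar>x - (real_of_int (kap m s x) / m - s)\<bar> \<le> 1/2" by (rule cell_center[OF assms(1) refl])
  ultimately show ?thesis by linarith
qed

lemma chi_out:
  assumes "m \<ge> 1" "chi m s R (kap m s x) \<noteq> 1"
  shows "\<bar>x\<bar> \<ge> R - 1/2"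
proof -
  have "\<bar>real_of_int (kap m s x) / m - s\<bar> > R" using assms(2) unfolding chi_def by (auto split: if_splits)
  moreover have "\<bar>x - (real_of_int (kap m s x) / m - s)\<bar> \<le> 1/2" by (rule cell_center[OF assms(1) refl])
  ultimately show ?thesis by linarith
qed

lemma E1_bound:
  assumes m: "m \<ge> 1" and d: "\<delta> > 0"
  shows "\<bar>E1 m s R \<delta> x\<bar> \<le> Eb R \<delta> x"
proof (cases "chi m s R (kap m s x) = 0")
  case True then show ?thesis unfolding E1_def Eb_def using p_nonneg[of x] by (simp add: indicator_def)
next
  case False
  then have ch: "chi m s R (kap m s x) = 1" unfolding chi_def by (auto split: if_splits)
  have xin: "\<bar>x\<bar> \<le> R + 1/2" by (rule chi_in[OF m False])
  define M where "M = max (pm m s x) \<delta>"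
  have M1: "\<delta> \<le> M" unfolding M_def by simp
  have M2: "M \<le> max L \<delta>" unfolding M_def using pm_le_L[of m s x] m by auto
  have "ln \<delta> \<le> ln M" using M1 d by simp
  moreover have "ln M \<le> ln (max L \<delta>)" using M1 M2 d by simp
  ultimately have lnM: "\<bar>ln M\<bar> \<le> \<bar>ln \<delta>\<bar> + \<bar>ln (max L \<delta>)\<bar>" by linarith
  have "\<bar>E1 m s R \<delta> x\<bar> = \<bar>p x * ln (p x) - p x * ln M\<bar>"
    unfolding E1_def ch M_def by (simp add: algebra_simps)
  also have "\<dots> \<le> \<bar>p x * ln (p x)\<bar> + \<bar>p x * ln M\<bar>"
    by (rule abs_triangle_ineq4)
  also have "\<dots> = \<bar>p x * ln (p x)\<bar> + p x * \<bar>ln M\<bar>" using p_nonneg[of x] by (simp add: abs_mult)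
  also have "\<dots> \<le> \<bar>p x * ln (p x)\<bar> + p x * (\<bar>ln \<delta>\<bar> + \<bar>ln (max L \<delta>)\<bar>)"
    using lnM p_nonneg[of x] by (simp add: mult_left_mono)
  finally show ?thesis unfolding Eb_def using xin by simp
qed

lemma E1_int:
  assumes m: "m \<ge> 1" and d: "\<delta> > 0"
  shows "integrable lborel (E1 m s R \<delta>)"
proof (rule Bochner_Integration.integrable_bound[OF Eb_int])
  show "E1 m s R \<delta> \<in> borel_measurable lborel" by measurable
  have "norm (E1 m s R \<delta> x) \<le> norm (Eb R \<delta> x)" for x
    unfolding real_norm_def by (rule order_trans[OF E1_bound[OF m d] abs_ge_self])
  then show "AE x in lborel. norm (E1 m s R \<delta> x) \<le> norm (Eb R \<delta> x)" by simp
qed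


lemma int_T:
  fixes T :: "int \<Rightarrow> real" and f :: "real \<Rightarrow> real"
  assumes "integrable lborel f" "\<And>k. 0 \<le> T k" "\<And>k. T k \<le> 1"
  shows "integrable lborel (\<lambda>x. T (kap m s x) * f x)"
proof (rule Bochner_Integration.integrable_bound[OF assms(1)])
  show "(\<lambda>x. T (kap m s x) * f x) \<in> borel_measurable lborel"
    using assms(1) by measurable
  have "norm (T (kap m s x) * f x) \<le> norm (f x)" for x
    using assms(2,3)[of "kap m s x"] by (simp add: abs_mult mult_left_le_one_le)
  then show "AE x in lborel. norm (T (kap m s x) * f x) \<le> norm (f x)" by simp
qed

lemma small_t:
  fixes t \<delta> :: real
  assumes "t > 0" "\<delta> > 0"
  shows "t * (ln (max t \<delta>) - ln t) \<le> \<delta>"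
proof (cases "t \<ge> \<delta>")
  case True then show ?thesis using assms by simp
next
  case False
  then have "max t \<delta> = \<delta>" by simp
  have "ln (\<delta> / t) \<le> \<delta> / t - 1" by (rule ln_le_minus_one) (use assms in simp)
  moreover have "ln (\<delta> / t) = ln \<delta> - ln t" using assms by (simp add: ln_div)
  ultimately have "t * (ln \<delta> - ln t) \<le> t * (\<delta> / t - 1)" using assms by (intro mult_left_mono) auto
  also have "\<dots> = \<delta> - t" using assms by (simp add: field_simps)
  finally show ?thesis using \<open>max t \<delta> = \<delta>\<close> assms by simp
qed

lemma D_upper:
  assumes m: "m \<ge> 1" and d: "\<delta> > 0" and R: "R > 0"
  shows "integral\<^sup>L lborel (D m s) \<le> integral\<^sup>L lborel (E1 m s R \<delta>) + \<delta> * (2*R + 1)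
           + (\<integral>x. indicator {x. \<bar>x\<bar> \<ge> R - 1/2} x * F x \<partial>lborel)"
proof -
  have m0: "m > 0" using m by simp
  define ch where "ch k = chi m s R k" for k
  define nch where "nch k = 1 - chi m s R k" for k
  have ch01: "0 \<le> ch k" "ch k \<le> 1" for k unfolding ch_def using chi_01 by auto
  have nch01: "0 \<le> nch k" "nch k \<le> 1" for k unfolding nch_def using chi_01 by auto
  define G2 where "G2 k = (if qr p m s k > 0 then ln (max (m * qr p m s k) \<delta>) - ln (m * qr p m s k) else 0)" for k
  define G where "G k = ch k * G2 k" for k
  have G2nn: "G2 k \<ge> 0" for k
  proof (cases "qr p m s k > 0")
    case True
    then have t: "m * qr p m s k > 0" using m0 by simp
    then have "ln (m * qr p m s k) \<le> ln (max (m * qr p m s k) \<delta>)"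
      using d by (subst ln_le_cancel_iff) auto
    then show ?thesis unfolding G2_def using True by simp
  qed (simp add: G2_def)
  have Gnn: "G k \<ge> 0" for k unfolding G_def using G2nn ch01 by simp
  define E2 where "E2 x = p x * G (kap m s x)" for x
  have E2_meas[measurable]: "E2 \<in> borel_measurable lborel" unfolding E2_def by measurable
  have E2nn: "E2 x \<ge> 0" for x unfolding E2_def using Gnn p_nonneg by simp
  define B where "B = {x::real. \<bar>x\<bar> \<le> R + 1/2}"
  have B_eq: "B = {-(R + 1/2) .. R + 1/2}" unfolding B_def by auto
  have B_meas: "emeasure lborel B = ennreal (2*R + 1)"
    unfolding B_eq using R by simp
  have ptw: "pm m s x * G (kap m s x) \<le> \<delta> * indicator B x" for x
  proof (cases "ch (kap m s x) = 0")
    case True then show ?thesis using d by (simp add: G_def indicator_def)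
  next
    case False
    then have c1: "ch (kap m s x) = 1" unfolding ch_def chi_def by (auto split: if_splits)
    have xB: "x \<in> B" using chi_in[OF m, of s R x] False unfolding B_def ch_def by simp
    show ?thesis
    proof (cases "qr p m s (kap m s x) > 0")
      case True
      have "pm m s x * G (kap m s x) = (m * qr p m s (kap m s x)) * (ln (max (m * qr p m s (kap m s x)) \<delta>) - ln (m * qr p m s (kap m s x)))"
        unfolding G_def G2_def pm_def c1 using True by simp
      also have "\<dots> \<le> \<delta>" by (rule small_t) (use True m0 d in auto)
      finally show ?thesis using xB by simp
    next
      case False
      then show ?thesis using xB d by (simp add: G_def G2_def)
    qed
  qed
  have E2nn_int: "(\<integral>\<^sup>+x. ennreal (E2 x) \<partial>lborel) \<le> ennreal (\<delta> * (2*R + 1))"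
  proof -
    have "(\<integral>\<^sup>+x. ennreal (E2 x) \<partial>lborel) = (\<integral>\<^sup>+x. ennreal (pm m s x * G (kap m s x)) \<partial>lborel)"
      unfolding E2_def by (rule F2[OF m0 Gnn])
    also have "\<dots> \<le> (\<integral>\<^sup>+x. ennreal \<delta> * indicator B x \<partial>lborel)"
    proof (intro nn_integral_mono)
      fix x
      have "ennreal (pm m s x * G (kap m s x)) \<le> ennreal (\<delta> * indicator B x)" by (rule ennreal_leI[OF ptw])
      also have "\<dots> = ennreal \<delta> * indicator B x" by (simp add: indicator_def)
      finally show "ennreal (pm m s x * G (kap m s x)) \<le> ennreal \<delta> * indicator B x" .
    qed
    also have "\<dots> = ennreal \<delta> * ennreal (2*R + 1)"
      using B_meas by (subst nn_integral_cmult_indicator) (auto simp: B_eq)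
    also have "\<dots> = ennreal (\<delta> * (2*R + 1))" using d R by (simp add: ennreal_mult)
    finally show ?thesis .
  qed
  have E2_int: "integrable lborel E2"
    by (rule integrableI_nonneg) (use E2nn E2nn_int in \<open>auto simp: le_less_trans\<close>)
  have E2_le: "integral\<^sup>L lborel E2 \<le> \<delta> * (2*R + 1)"
  proof -
    have "integral\<^sup>L lborel E2 = enn2real (\<integral>\<^sup>+x. ennreal (E2 x) \<partial>lborel)"
      by (rule integral_eq_nn_integral) (use E2nn in auto)
    also have "\<dots> \<le> enn2real (ennreal (\<delta> * (2*R + 1)))"
      by (rule enn2real_mono[OF E2nn_int]) simp
    also have "\<dots> = \<delta> * (2*R + 1)" using d R by simp
    finally show ?thesis .
  qed
  have Dint: "integrable lborel (D m s)" by (rule D_int[OF m])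
  have chD_int: "integrable lborel (\<lambda>x. ch (kap m s x) * D m s x)" by (rule int_T[OF Dint ch01])
  have nchD_int: "integrable lborel (\<lambda>x. nch (kap m s x) * D m s x)" by (rule int_T[OF Dint nch01])
  have split: "integral\<^sup>L lborel (D m s) = (\<integral>x. ch (kap m s x) * D m s x \<partial>lborel) + (\<integral>x. nch (kap m s x) * D m s x \<partial>lborel)"
  proof -
    have "integral\<^sup>L lborel (D m s) = (\<integral>x. ch (kap m s x) * D m s x + nch (kap m s x) * D m s x \<partial>lborel)"
    proof -
      have "(\<lambda>x. ch (kap m s x) * D m s x + nch (kap m s x) * D m s x) = D m s"
        by (rule ext) (simp add: ch_def nch_def algebra_simps)
      then show ?thesis by simp
    qed
    also have "\<dots> = (\<integral>x. ch (kap m s x) * D m s x \<partial>lborel) + (\<integral>x. nch (kap m s x) * D m s x \<partial>lborel)"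
      by (rule Bochner_Integration.integral_add[OF chD_int nchD_int])
    finally show ?thesis .
  qed
  have ae_mid: "AE x in lborel. ch (kap m s x) * D m s x = E1 m s R \<delta> x + E2 x"
    using pos_qr[OF m0, of s]
  proof eventually_elim
    case (elim x)
    show ?case
    proof (cases "p x > 0")
      case False
      then have "p x = 0" using p_nonneg[of x] by simp
      then show ?thesis by (simp add: D_def Am_def E1_def E2_def)
    next
      case True
      define q where "q = qr p m s (kap m s x)"
      have q0: "q > 0" using elim True unfolding q_def by simp
      have pmq: "pm m s x = m * q" unfolding pm_def q_def ..
      have lnmq: "ln (m * q) = ln m + ln q" using m0 q0 by (simp add: ln_mult)
      show ?thesis
        unfolding D_def Am_def E1_def E2_def G_def G2_def q_def[symmetric] pmq ch_def
        using q0 lnmq by (simp add: algebra_simps)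
    qed
  qed
  have mid: "(\<integral>x. ch (kap m s x) * D m s x \<partial>lborel) = integral\<^sup>L lborel (E1 m s R \<delta>) + integral\<^sup>L lborel E2"
  proof -
    have "(\<integral>x. ch (kap m s x) * D m s x \<partial>lborel) = (\<integral>x. E1 m s R \<delta> x + E2 x \<partial>lborel)"
      by (rule integral_cong_AE) (use ae_mid in auto)
    also have "\<dots> = integral\<^sup>L lborel (E1 m s R \<delta>) + integral\<^sup>L lborel E2"
      by (rule Bochner_Integration.integral_add[OF E1_int[OF m d] E2_int])
    finally show ?thesis .
  qed
  define H where "H x = \<bar>p x * ln (p x)\<bar> + p x * (- ln (w x))" for x
  have H_int: "integrable lborel H" unfolding H_def using plnp_abs_int wlog_int by auto
  have ae_tail: "AE x in lborel. nch (kap m s x) * D m s x \<le> nch (kap m s x) * H x + nch (kap m s x) * Bm m s x"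
    using gibbs[OF m, of s]
  proof eventually_elim
    case (elim x)
    have "D m s x \<le> H x + Bm m s x"
      using elim abs_ge_self[of "p x * ln (p x)"] unfolding D_def H_def by linarith
    then have "nch (kap m s x) * D m s x \<le> nch (kap m s x) * (H x + Bm m s x)"
      using nch01 by (intro mult_left_mono) auto
    then show ?case by (simp add: algebra_simps)
  qed
  have nchH_int: "integrable lborel (\<lambda>x. nch (kap m s x) * H x)" by (rule int_T[OF H_int nch01])
  have nchB: "integrable lborel (\<lambda>x. nch (kap m s x) * Bm m s x)"
    "(\<integral>x. nch (kap m s x) * Bm m s x \<partial>lborel) \<le> (\<integral>x. nch (kap m s x) * U x \<partial>lborel)"
    using Bm_bound[OF m, of nch s, OF nch01(1) nch01(2)] by auto
  have nchU_int: "integrable lborel (\<lambda>x. nch (kap m s x) * U x)" by (rule int_T[OF U_integrable nch01])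
  have tail1: "(\<integral>x. nch (kap m s x) * D m s x \<partial>lborel) \<le>
      (\<integral>x. nch (kap m s x) * H x \<partial>lborel) + (\<integral>x. nch (kap m s x) * Bm m s x \<partial>lborel)"
  proof -
    have "(\<integral>x. nch (kap m s x) * D m s x \<partial>lborel) \<le> (\<integral>x. nch (kap m s x) * H x + nch (kap m s x) * Bm m s x \<partial>lborel)"
      by (rule integral_mono_AE[OF nchD_int _ ae_tail]) (use nchH_int nchB(1) in auto)
    also have "\<dots> = (\<integral>x. nch (kap m s x) * H x \<partial>lborel) + (\<integral>x. nch (kap m s x) * Bm m s x \<partial>lborel)"
      by (rule Bochner_Integration.integral_add[OF nchH_int nchB(1)])
    finally show ?thesis .
  qed
  have indF_int: "integrable lborel (\<lambda>x. indicator {x. \<bar>x\<bar> \<ge> R - 1/2} x * F x)"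
    using integrable_real_mult_indicator[OF _ F_int, of "{x. \<bar>x\<bar> \<ge> R - 1/2}"] by (simp add: mult.commute)
  have tail2: "(\<integral>x. nch (kap m s x) * H x \<partial>lborel) + (\<integral>x. nch (kap m s x) * U x \<partial>lborel)
      \<le> (\<integral>x. indicator {x. \<bar>x\<bar> \<ge> R - 1/2} x * F x \<partial>lborel)"
  proof -
    have "(\<integral>x. nch (kap m s x) * H x \<partial>lborel) + (\<integral>x. nch (kap m s x) * U x \<partial>lborel)
        = (\<integral>x. nch (kap m s x) * F x \<partial>lborel)"
      by (subst Bochner_Integration.integral_add[OF nchH_int nchU_int, symmetric]) (simp add: F_def H_def algebra_simps)
    also have "\<dots> \<le> (\<integral>x. indicator {x. \<bar>x\<bar> \<ge> R - 1/2} x * F x \<partial>lborel)"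
    proof (rule integral_mono[OF int_T[OF F_int nch01] indF_int])
      fix x
      show "nch (kap m s x) * F x \<le> indicator {x. \<bar>x\<bar> \<ge> R - 1/2} x * F x"
      proof (cases "chi m s R (kap m s x) = 1")
        case True then show ?thesis using F_nonneg[of x] by (simp add: nch_def indicator_def)
      next
        case False
        then have "\<bar>x\<bar> \<ge> R - 1/2" by (rule chi_out[OF m])
        then show ?thesis using nch01[of "kap m s x"] F_nonneg[of x] by (simp add: indicator_def mult_left_le_one_le)
      qed
    qed
    finally show ?thesis .
  qed
  show ?thesis using split mid E2_le tail1 tail2 nchB(2) by linarith
qed


lemma tail_small:
  assumes e: "e > 0"
  obtains R where "R > 0" "(\<integral>x. indicator {x. \<bar>x\<bar> \<ge> R - 1/2} x * F x \<partial>lborel) < e"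
proof -
  define sq where "sq n x = indicator {x. \<bar>x\<bar> \<ge> real n - 1/2} x * F x" for n x
  have lim: "(\<lambda>n. integral\<^sup>L lborel (sq n)) \<longlonglongrightarrow> integral\<^sup>L lborel (\<lambda>x::real. 0::real)"
  proof (rule integral_dominated_convergence[where w = F])
    show "(\<lambda>x::real. 0::real) \<in> borel_measurable lborel" by simp
    show "sq n \<in> borel_measurable lborel" for n unfolding sq_def using F_int by measurable
    show "integrable lborel F" by (rule F_int)
    show "AE x in lborel. (\<lambda>n. sq n x) \<longlonglongrightarrow> 0"
    proof (rule AE_I2)
      fix x
      obtain N :: nat where N: "\<bar>x\<bar> + 1 < real N" using reals_Archimedean2 by blast
      have "eventually (\<lambda>n. sq n x = 0) sequentially"
        unfolding eventually_sequentially
        by (rule exI[of _ N]) (use N in \<open>auto simp: sq_def indicator_def\<close>)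
      then show "(\<lambda>n. sq n x) \<longlonglongrightarrow> 0" by (simp add: tendsto_eventually)
    qed
    show "AE x in lborel. norm (sq n x) \<le> F x" for n
      using F_nonneg by (intro AE_I2) (auto simp: sq_def indicator_def)
  qed
  then have "(\<lambda>n. integral\<^sup>L lborel (sq n)) \<longlonglongrightarrow> 0" by simp
  then have "eventually (\<lambda>n. integral\<^sup>L lborel (sq n) < e) sequentially"
    using e by (rule order_tendstoD)
  then obtain N where N: "\<And>n. n \<ge> N \<Longrightarrow> integral\<^sup>L lborel (sq n) < e"
    unfolding eventually_sequentially by blast
  show ?thesis
    by (rule that[of "real (Suc N)"]) (use N[of "Suc N"] in \<open>auto simp: sq_def[abs_def]\<close>)
qed

definition glim :: "real \<Rightarrow> real \<Rightarrow> real \<Rightarrow> real" where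
  "glim R \<delta> x = indicator {x. \<bar>x\<bar> < R} x * (p x * (ln (p x) - ln (max (p x) \<delta>)))"

lemma glim_nonpos:
  assumes "\<delta> > 0"
  shows "glim R \<delta> x \<le> 0"
proof (cases "p x > 0")
  case True
  then have "ln (p x) \<le> ln (max (p x) \<delta>)" by (subst ln_le_cancel_iff) auto
  then have "p x * (ln (p x) - ln (max (p x) \<delta>)) \<le> 0" using True by (simp add: mult_nonneg_nonpos)
  then show ?thesis unfolding glim_def by (simp add: indicator_def)
next
  case False then have "p x = 0" using p_nonneg[of x] by simp
  then show ?thesis unfolding glim_def by simp
qed

lemma E1_lim:
  assumes d: "\<delta> > 0" and R: "R > 0"
  shows "(\<lambda>n. integral\<^sup>L lborel (E1 (real n) (c n) R \<delta>)) \<longlonglongrightarrow> integral\<^sup>L lborel (glim R \<delta>)"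
proof -
  have "(\<lambda>n. integral\<^sup>L lborel (E1 (real (Suc n)) (c (Suc n)) R \<delta>)) \<longlonglongrightarrow> integral\<^sup>L lborel (glim R \<delta>)"
  proof (rule integral_dominated_convergence[where w = "Eb R \<delta>"])
    show "glim R \<delta> \<in> borel_measurable lborel" unfolding glim_def by measurable
    show "E1 (real (Suc n)) (c (Suc n)) R \<delta> \<in> borel_measurable lborel" for n by measurable
    show "integrable lborel (Eb R \<delta>)" by (rule Eb_int)
    show "AE x in lborel. norm (E1 (real (Suc n)) (c (Suc n)) R \<delta> x) \<le> Eb R \<delta> x" for n
      using E1_bound[of "real (Suc n)" \<delta> "c (Suc n)" R] d by (intro AE_I2) simp
    have null: "AE x in lborel. x \<notin> {R, -R}"
      by (rule AE_not_in, rule countable_imp_null_set_lborel, simp)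
    show "AE x in lborel. (\<lambda>n. E1 (real (Suc n)) (c (Suc n)) R \<delta> x) \<longlonglongrightarrow> glim R \<delta> x"
      using cont null
    proof eventually_elim
      case (elim x)
      then have xR: "\<bar>x\<bar> \<noteq> R" by auto
      have t1: "(\<lambda>n. chi (real n) (c n) R (kap (real n) (c n) x)) \<longlonglongrightarrow> indicator {x. \<bar>x\<bar> < R} x"
        by (rule chi_tendsto[OF xR])
      have t2: "(\<lambda>n. pm (real n) (c n) x) \<longlonglongrightarrow> p x" by (rule pm_tendsto[OF elim(1)])
      have t3: "(\<lambda>n. max (pm (real n) (c n) x) \<delta>) \<longlonglongrightarrow> max (p x) \<delta>"
        by (intro tendsto_max t2 tendsto_const)
      have t4: "(\<lambda>n. ln (max (pm (real n) (c n) x) \<delta>)) \<longlonglongrightarrow> ln (max (p x) \<delta>)"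
        by (rule tendsto_ln[OF t3]) (use d in auto)
      have "(\<lambda>n. E1 (real n) (c n) R \<delta> x) \<longlonglongrightarrow> glim R \<delta> x"
        unfolding E1_def glim_def
        by (intro tendsto_mult t1 tendsto_const tendsto_diff t4)
      then show ?case by (rule LIMSEQ_Suc)
    qed
  qed
  then show ?thesis by (rule LIMSEQ_imp_Suc)
qed

lemma D_lim: "(\<lambda>n. integral\<^sup>L lborel (D (real n) (c n))) \<longlonglongrightarrow> 0"
proof (rule order_tendstoI)
  fix a :: real assume a: "a < 0"
  have "eventually (\<lambda>n. real n \<ge> 1) sequentially"
    unfolding eventually_sequentially by (rule exI[of _ 1]) auto
  then show "eventually (\<lambda>n. a < integral\<^sup>L lborel (D (real n) (c n))) sequentially"
    by (rule eventually_mono) (use D_lower a in \<open>smt (verit)\<close>)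
next
  fix a :: real assume a: "a > 0"
  obtain R where R: "R > 0" "(\<integral>x. indicator {x. \<bar>x\<bar> \<ge> R - 1/2} x * F x \<partial>lborel) < a/4"
    using tail_small[of "a/4"] a by auto
  define \<delta> where "\<delta> = a / (4 * (2*R + 1))"
  have d: "\<delta> > 0" unfolding \<delta>_def using a R by simp
  have dR: "\<delta> * (2*R + 1) = a/4" unfolding \<delta>_def using R by (simp add: field_simps)
  have "integral\<^sup>L lborel (glim R \<delta>) < a/4"
  proof -
    have "0 \<le> (\<integral>x. - glim R \<delta> x \<partial>lborel)"
      by (rule integral_nonneg_AE) (use glim_nonpos[OF d] in auto)
    then show ?thesis using a by simp
  qed
  then have ev1: "eventually (\<lambda>n. integral\<^sup>L lborel (E1 (real n) (c n) R \<delta>) < a/4) sequentially"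
    by (rule order_tendstoD(2)[OF E1_lim[OF d R(1), of c]])
  have ev2: "eventually (\<lambda>n. real n \<ge> 1) sequentially"
    unfolding eventually_sequentially by (rule exI[of _ 1]) auto
  show "eventually (\<lambda>n. integral\<^sup>L lborel (D (real n) (c n)) < a) sequentially"
    using ev1 ev2
  proof eventually_elim
    case (elim n)
    have "integral\<^sup>L lborel (D (real n) (c n)) \<le> integral\<^sup>L lborel (E1 (real n) (c n) R \<delta>) + \<delta> * (2*R + 1)
           + (\<integral>x. indicator {x. \<bar>x\<bar> \<ge> R - 1/2} x * F x \<partial>lborel)"
      by (rule D_upper[OF elim(2) d R(1)])
    then show ?case using elim(1) dR R(2) a by linarith
  qed
qed


lemma main_limit:
  "(\<lambda>m. disc_entropy M (\<lambda>\<omega>. quant (real m) (X \<omega> + c m)) - ln (real m)) \<longlonglongrightarrow> diff_entropy p"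
proof -
  have eq: "disc_entropy M (\<lambda>\<omega>. quant (real m) (X \<omega> + c m)) - ln (real m)
          = integral\<^sup>L lborel (D (real m) (c m)) + diff_entropy p" if m: "m \<ge> 1" for m :: nat
  proof -
    have m1: "real m \<ge> 1" using m by simp
    have m0: "real m > 0" using m by simp
    have "disc_entropy M (\<lambda>\<omega>. quant (real m) (X \<omega> + c m)) = enn2real (Ent (real m) (c m))"
      by (rule ent_link(2)[OF m0])
    also have "\<dots> = integral\<^sup>L lborel (Am (real m) (c m))"
      using Ent_fin[OF m1, of "c m"] Am_nonneg by (simp add: integral_nonneg_AE)
    finally have H: "disc_entropy M (\<lambda>\<omega>. quant (real m) (X \<omega> + c m)) = integral\<^sup>L lborel (Am (real m) (c m))" .
    have "integral\<^sup>L lborel (D (real m) (c m)) = integral\<^sup>L lborel (Am (real m) (c m))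
           - (\<integral>x. p x * ln (real m) \<partial>lborel) + (\<integral>x. p x * ln (p x) \<partial>lborel)"
      unfolding D_def using Am_int[OF m1, of "c m"] p_integrable plnp_int
      by (subst Bochner_Integration.integral_add) (auto intro!: Bochner_Integration.integral_diff)
    also have "(\<integral>x. p x * ln (real m) \<partial>lborel) = ln (real m)"
      using p_integral by simp
    finally show ?thesis unfolding H diff_entropy_def by simp
  qed
  have "(\<lambda>m. integral\<^sup>L lborel (D (real m) (c m)) + diff_entropy p) \<longlonglongrightarrow> 0 + diff_entropy p"
    by (intro tendsto_add D_lim tendsto_const)
  then have "(\<lambda>m. integral\<^sup>L lborel (D (real m) (c m)) + diff_entropy p) \<longlonglongrightarrow> diff_entropy p" by simp
  moreover have "eventually (\<lambda>m. integral\<^sup>L lborel (D (real m) (c m)) + diff_entropy p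
      = disc_entropy M (\<lambda>\<omega>. quant (real m) (X \<omega> + c m)) - ln (real m)) sequentially"
    unfolding eventually_sequentially by (rule exI[of _ 1]) (use eq in auto)
  ultimately show ?thesis by (rule Lim_transform_eventually)
qed

end

theorem mainTheorem14:
  fixes M :: "'a measure" and X :: "'a \<Rightarrow> real" and p :: "real \<Rightarrow> real"
    and c :: "nat \<Rightarrow> real"
  assumes "prob_space M"
    and "\<And>x. p x \<ge> 0"
    and "distributed M lborel X (\<lambda>x. ennreal (p x))"
    and "piecewise_continuous p"
    and "disc_entropy_finite M (\<lambda>\<omega>. quant 1 (X \<omega>))"
    and "integrable lborel (\<lambda>x. p x * \<bar>ln (p x)\<bar>)"
    and "esssup lborel (\<lambda>x. ereal (p x)) < \<infinity>"
  shows "(\<lambda>m. disc_entropy M (\<lambda>\<omega>. quant (real m) (X \<omega> + c m)) - ln (real m))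
           \<longlonglongrightarrow> diff_entropy p"
proof -
  interpret qsetup M X p
    by (rule qsetup.intro[OF assms(1)]) (rule qsetup_axioms.intro[OF assms(2,3)])
  define E where "E = esssup lborel (\<lambda>x. ereal (p x))"
  define L where "L = max 1 (real_of_ereal E)"
  have EL: "E \<le> ereal L"
  proof (cases E)
    case (real r) then show ?thesis unfolding L_def by simp
  next
    case PInf then show ?thesis using assms(7) unfolding E_def by simp
  next
    case MInf then show ?thesis by simp
  qed
  have bnd: "AE x in lborel. p x \<le> L"
    using esssup_AE[of "\<lambda>x. ereal (p x)" lborel]
  proof eventually_elim
    case (elim x)
    have "ereal (p x) \<le> ereal L" using elim EL unfolding E_def by (rule order_trans)
    then show ?case by simp
  qed
  have L1: "L \<ge> 1" unfolding L_def by simp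
  have Efin: "Ent 1 0 < \<infinity>"
    using ent_link(1)[of 1 0] assms(5) by simp
  have cont: "AE x in lborel. isCont p x"
  proof (rule AE_I')
    have eqS: "{x. \<not> isCont p x} = (\<Union>n::nat. {x \<in> {-real n..real n}. \<not> isCont p x})"
    proof safe
      fix x assume "\<not> isCont p x"
      obtain n :: nat where "\<bar>x\<bar> \<le> real n" using real_arch_simple by blast
      then show "x \<in> (\<Union>n::nat. {x \<in> {-real n..real n}. \<not> isCont p x})" using \<open>\<not> isCont p x\<close> by (intro UN_I[of n]) auto
    qed
    have "countable {x. \<not> isCont p x}"
      unfolding eqS using assms(4) unfolding piecewise_continuous_def
      by (intro countable_UN) (auto intro: countable_finite)
    then show "{x. \<not> isCont p x} \<in> null_sets lborel" by (rule countable_imp_null_set_lborel)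
    show "{x \<in> space lborel. \<not> isCont p x} \<subseteq> {x. \<not> isCont p x}" by auto
  qed
  interpret qsetup3 M X p L
    by (intro qsetup3.intro qsetup2.intro qsetup2_axioms.intro qsetup3_axioms.intro qsetup_axioms)
       (use L1 bnd Efin assms(6) cont in auto)
  show ?thesis by (rule main_limit)
qed

end
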